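(* Let $\mu\in(0,1]$, let $X\subset\mathbb{R}^d$ be a complementary regular set with $\operatorname{reach}_\mu(X)>0$, and let $x\in\partial X$. Then $\Delta\big(\operatorname{Conv}(\operatorname{Nor}(\mathcal{C}X,x)\cap\mathbb{S}^{d-1})\big)\ge\mu$.
   Context: $d_A(y)=\inf_{a\in A}\|y-a\|$; $\mathcal{C}A:=\overline{\mathbb{R}^d\setminus A}$; $\partial A=\overline A\setminus\operatorname{int}A$; $\operatorname{Conv}$ is the convex hull; $\Delta(B)=\inf_{b\in B}\|b\|$. Clarke gradient $\partial\phi(y)$: convex hull of limits $\lim_i\nabla\phi(y_i)$, $y_i\to y$, $\phi$ differentiable at $y_i$. Reach of closed $A$: supremum of $t\ge0$ such that every $y$ with $d_A(y)<t$ has a unique nearest point in $A$. $\operatorname{reach}_\mu(A)=\sup\{s:\Delta(\partial d_A(y))\ge\mu\text{ for all }y\text{ with }0<d_A(y)\le s\}$. Complementary regular: compact $X$ with $\overline{\operatorname{int}X}=X$, $\operatorname{reach}_{\mu'}(X)>0$ for some $\mu'\in(0,1]$, $\operatorname{reach}(\mathcal{C}X)>0$. Tangent cone $\operatorname{Tan}(A,x)$: cone generated by limits $(x_n-x)/\|x_n-x\|$, $x_n\in A\setminus\{x\}$, $x_n\to x$. Polar cone $B^\circ=\{u:\langle u,b\rangle\le0\ \forall b\in B\}$. For a closed set $A$ of positive reach, $\operatorname{Nor}(A,x)=\operatorname{Tan}(A,x)^\circ$. *)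

theory Defs
  imports "HOL-Analysis.Analysis"
begin

definition dist_fun :: "'a::euclidean_space set \<Rightarrow> 'a \<Rightarrow> real" where
  "dist_fun A y = infdist y A"

definition compl_cl :: "'a::euclidean_space set \<Rightarrow> 'a set" where
  "compl_cl A = closure (UNIV - A)"

definition Delta :: "'a::euclidean_space set \<Rightarrow> real" where
  "Delta B = Inf (norm ` B)"

definition clarke_grad :: "('a::euclidean_space \<Rightarrow> real) \<Rightarrow> 'a \<Rightarrow> 'a set" where
  "clarke_grad \<phi> y = convex hull
     {l. \<exists>ys g. ys \<longlonglongrightarrow> y \<and>
                (\<forall>i. (\<phi> has_derivative (\<lambda>h. g i \<bullet> h)) (at (ys i))) \<and>
                g \<longlonglongrightarrow> l}"

text \<open>Reach of a set (may be infinite, hence extended real).\<close>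
definition reach :: "'a::euclidean_space set \<Rightarrow> ereal" where
  "reach A = Sup {ereal t | t. t \<ge> 0 \<and>
      (\<forall>y. dist_fun A y < t \<longrightarrow> (\<exists>!a. a \<in> A \<and> norm (y - a) = dist_fun A y))}"

definition reach_mu :: "real \<Rightarrow> 'a::euclidean_space set \<Rightarrow> ereal" where
  "reach_mu \<mu> A = Sup {ereal s | s. s \<ge> 0 \<and>
      (\<forall>y. 0 < dist_fun A y \<and> dist_fun A y \<le> s \<longrightarrow>
            Delta (clarke_grad (dist_fun A) y) \<ge> \<mu>)}"

definition complementary_regular :: "'a::euclidean_space set \<Rightarrow> bool" where
  "complementary_regular X \<longleftrightarrow>
     compact X \<and> closure (interior X) = X \<and>
     (\<exists>\<mu>'. 0 < \<mu>' \<and> \<mu>' \<le> 1 \<and> reach_mu \<mu>' X > 0) \<and>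
     reach (compl_cl X) > 0"

definition tan_cone :: "'a::euclidean_space set \<Rightarrow> 'a \<Rightarrow> 'a set" where
  "tan_cone A x =
     (let L = {u. \<exists>xs. (\<forall>n. xs n \<in> A - {x}) \<and> xs \<longlonglongrightarrow> x \<and>
                       (\<lambda>n. (1 / norm (xs n - x)) *\<^sub>R (xs n - x)) \<longlonglongrightarrow> u}
      in {0} \<union> {t *\<^sub>R u | t u. t \<ge> 0 \<and> u \<in> L})"

definition polar_cone :: "'a::euclidean_space set \<Rightarrow> 'a set" where
  "polar_cone B = {u. \<forall>b\<in>B. u \<bullet> b \<le> 0}"

definition nor_cone :: "'a::euclidean_space set \<Rightarrow> 'a \<Rightarrow> 'a set" where
  "nor_cone A x = polar_cone (tan_cone A x)"

end

theory Submission
  imports Defs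
begin
lemma squeeze_deriv:
  fixes f u l :: "'a::real_normed_vector \<Rightarrow> real"
  assumes "\<And>w. l w \<le> f w" "\<And>w. f w \<le> u w" "l y = f y" "u y = f y"
    and "(u has_derivative L) (at y)" "(l has_derivative L) (at y)"
  shows "(f has_derivative L) (at y)"
proof -
  have bl: "bounded_linear L" using assms(5) has_derivative_at_alt by blast
  show ?thesis unfolding has_derivative_at_alt
  proof (intro conjI bl allI impI)
    fix e :: real assume e: "e > 0"
    obtain d1 where d1: "d1 > 0" "\<And>w. norm (w - y) < d1 \<Longrightarrow> norm (u w - u y - L (w - y)) \<le> e * norm (w - y)"
      using assms(5) e unfolding has_derivative_at_alt by blast
    obtain d2 where d2: "d2 > 0" "\<And>w. norm (w - y) < d2 \<Longrightarrow> norm (l w - l y - L (w - y)) \<le> e * norm (w - y)"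
      using assms(6) e unfolding has_derivative_at_alt by blast
    show "\<exists>d>0. \<forall>w. norm (w - y) < d \<longrightarrow> norm (f w - f y - L (w - y)) \<le> e * norm (w - y)"
    proof (intro exI[of _ "min d1 d2"] conjI allI impI)
      show "min d1 d2 > 0" using d1 d2 by simp
      fix w assume "norm (w - y) < min d1 d2"
      then have a: "\<bar>u w - u y - L (w - y)\<bar> \<le> e * norm (w - y)" and b: "\<bar>l w - l y - L (w - y)\<bar> \<le> e * norm (w - y)"
        using d1 d2 by auto
      have "l w \<le> f w" "f w \<le> u w" using assms by auto
      then show "norm (f w - f y - L (w - y)) \<le> e * norm (w - y)"
        using a b assms(3,4) by (simp add: abs_le_iff)
    qed
  qed
qed

lemma dist_deriv:
  fixes S :: "'a::euclidean_space set"
  assumes p: "p \<in> S" and nz: "norm (z - p) = infdist z S" and pos: "infdist z S > 0"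
    and th: "0 < \<theta>" "\<theta> < 1"
  shows "((\<lambda>w. infdist w S) has_derivative (\<lambda>h. ((z - p) /\<^sub>R infdist z S) \<bullet> h)) (at (p + \<theta> *\<^sub>R (z - p)))"
proof -
  define D where "D = infdist z S"
  define y where "y = p + \<theta> *\<^sub>R (z - p)"
  have Dp: "D > 0" using pos D_def by simp
  have up: "infdist w S \<le> norm (w - p)" for w using infdist_le[OF p, of w] by (simp add: dist_norm)
  have lo: "D - norm (w - z) \<le> infdist w S" for w
    using infdist_triangle[of z S w] by (simp add: D_def dist_norm norm_minus_commute)
  have yp: "y - p = \<theta> *\<^sub>R (z - p)" by (simp add: y_def)
  have yz: "y - z = (\<theta> - 1) *\<^sub>R (z - p)" by (simp add: y_def algebra_simps)
  have n1: "norm (y - p) = \<theta> * D" using yp th nz D_def by simp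
  have n2: "norm (y - z) = (1 - \<theta>) * D" using yz th nz D_def by (simp add: abs_if)
  have fy: "infdist y S = \<theta> * D"
    using up[of y] lo[of y] n1 n2 by (simp add: algebra_simps)
  have sg1: "sgn (y - p) = (z - p) /\<^sub>R D"
    using yp th nz D_def Dp by (simp add: sgn_div_norm)
  have cf: "(\<theta> - 1) / ((1 - \<theta>) * D) = - (1/D)" using th Dp by (simp add: field_simps)
  have sg2: "sgn (y - z) = - ((z - p) /\<^sub>R D)"
  proof -
    have "sgn (y - z) = sgn (\<theta> - 1) *\<^sub>R sgn (z - p)" unfolding yz by (rule sgn_scaleR)
    also have "\<dots> = - sgn (z - p)" using th by simp
    finally show ?thesis using nz D_def by (simp add: sgn_div_norm)
  qed
  have ynp: "y - p \<noteq> 0" using n1 th Dp by auto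
  have ynz: "y - z \<noteq> 0" using n2 th Dp by auto
  have d1: "((\<lambda>w. norm (w - p)) has_derivative (\<lambda>h. ((z - p) /\<^sub>R D) \<bullet> h)) (at y)"
  proof -
    have "((\<lambda>w. norm (w - p)) has_derivative (\<lambda>h. inner (h - 0) (sgn (y - p)))) (at y)"
      using has_derivative_compose[OF has_derivative_diff[OF has_derivative_ident has_derivative_const] has_derivative_norm[OF ynp]]
      by (simp add: o_def)
    then show ?thesis using sg1 by (simp add: inner_commute)
  qed
  have d2: "((\<lambda>w. D - norm (w - z)) has_derivative (\<lambda>h. ((z - p) /\<^sub>R D) \<bullet> h)) (at y)"
  proof -
    have "((\<lambda>w. norm (w - z)) has_derivative (\<lambda>h. inner (h - 0) (sgn (y - z)))) (at y)"
      using has_derivative_compose[OF has_derivative_diff[OF has_derivative_ident has_derivative_const] has_derivative_norm[OF ynz]]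
      by (simp add: o_def)
    then have "((\<lambda>w. D - norm (w - z)) has_derivative (\<lambda>h. 0 - inner (h - 0) (sgn (y - z)))) (at y)"
      by (intro has_derivative_diff has_derivative_const)
    then show ?thesis using sg2 by (simp add: inner_commute)
  qed
  show ?thesis
    unfolding D_def[symmetric] y_def[symmetric]
    by (rule squeeze_deriv[OF lo up _ _ d1 d2]) (use fy n1 n2 in \<open>auto simp: algebra_simps\<close>)
qed

lemma norm_add_sq:
  fixes v h :: "'a::real_inner"
  assumes "norm h = 1"
  shows "(norm (v + s *\<^sub>R h))^2 = (norm v)^2 + 2 * s * (h \<bullet> v) + s^2"
proof -
  have hh: "h \<bullet> h = 1" using assms by (simp add: dot_square_norm)
  have "(norm (v + s *\<^sub>R h))^2 = (v + s *\<^sub>R h) \<bullet> (v + s *\<^sub>R h)" by (simp add: dot_square_norm)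
  also have "\<dots> = v \<bullet> v + 2 * s * (h \<bullet> v) + s^2 * (h \<bullet> h)"
    by (simp add: inner_add_left inner_add_right inner_commute power2_eq_square algebra_simps)
  finally show ?thesis using hh by (simp add: dot_square_norm)
qed

lemma ascent:
  fixes S :: "'a::euclidean_space set"
  assumes cl: "closed S" and ne: "S \<noteq> {}" and Dp: "infdist z S > 0" and h1: "norm h = 1" and ep: "\<epsilon> > 0"
    and hyp: "\<And>p. p \<in> S \<Longrightarrow> norm (z - p) = infdist z S \<Longrightarrow> h \<bullet> (z - p) \<ge> \<beta> * infdist z S"
  shows "\<exists>\<delta>>0. \<forall>\<sigma>. 0 < \<sigma> \<and> \<sigma> < \<delta> \<longrightarrow> infdist (z + \<sigma> *\<^sub>R h) S \<ge> infdist z S + \<sigma> * (\<beta> - \<epsilon>)"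
proof -
  define D where "D = infdist z S"
  have D0: "D > 0" using Dp D_def by simp
  define K where "K = {q \<in> S \<inter> cball z (D+1). h \<bullet> (z - q) \<le> D * (\<beta> - \<epsilon>/2)}"
  have cK: "compact K"
  proof -
    have "closed {q. h \<bullet> (z - q) \<le> D * (\<beta> - \<epsilon>/2)}"
      by (intro closed_Collect_le continuous_intros)
    moreover have "K = S \<inter> cball z (D+1) \<inter> {q. h \<bullet> (z - q) \<le> D * (\<beta> - \<epsilon>/2)}" by (auto simp: K_def)
    ultimately have "closed K" using cl by (simp add: closed_Int)
    moreover have "K \<subseteq> cball z (D+1)" by (auto simp: K_def)
    then have "bounded K" using bounded_subset[OF bounded_cball] by blast
    ultimately show ?thesis by (simp add: compact_eq_bounded_closed)
  qed
  have "\<exists>\<eta>>0. \<forall>q\<in>K. norm (z - q) \<ge> D + \<eta>"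
  proof (cases "K = {}")
    case True then show ?thesis by (intro exI[of _ 1]) auto
  next
    case False
    have "continuous_on K (\<lambda>q. norm (z - q))" by (intro continuous_intros)
    then obtain q0 where q0: "q0 \<in> K" "\<And>q. q \<in> K \<Longrightarrow> norm (z - q0) \<le> norm (z - q)"
      using continuous_attains_inf[OF cK False, of "\<lambda>q. norm (z - q)"] by blast
    have q0S: "q0 \<in> S" and q0h: "h \<bullet> (z - q0) \<le> D * (\<beta> - \<epsilon>/2)" using q0(1) K_def by auto
    have ge: "norm (z - q0) \<ge> D" using infdist_le[OF q0S, of z] D_def by (simp add: dist_norm)
    have "norm (z - q0) \<noteq> D"
    proof
      assume "norm (z - q0) = D"
      then have "h \<bullet> (z - q0) \<ge> \<beta> * D" using hyp[OF q0S] D_def by simp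
      moreover have "D * (\<beta> - \<epsilon>/2) < \<beta> * D" using D0 ep by (simp add: algebra_simps)
      ultimately show False using q0h by simp
    qed
    then have "norm (z - q0) > D" using ge by simp
    then show ?thesis using q0(2) by (intro exI[of _ "norm (z - q0) - D"]) force
  qed
  then obtain \<eta> where eta: "\<eta> > 0" "\<And>q. q \<in> K \<Longrightarrow> norm (z - q) \<ge> D + \<eta>" by blast
  define \<delta> where "\<delta> = min (min \<eta> 1 / 2) (D * \<epsilon> / ((\<beta> - \<epsilon>)^2 + 1))"
  have "(\<beta> - \<epsilon>)^2 + 1 > 0" by (simp add: add_nonneg_pos)
  then have "D * \<epsilon> / ((\<beta> - \<epsilon>)^2 + 1) > 0" using D0 ep by simp
  then have dp: "\<delta> > 0" unfolding \<delta>_def using eta by simp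
  show ?thesis
  proof (intro exI[of _ \<delta>] conjI dp allI impI)
    fix \<sigma> assume s: "0 < \<sigma> \<and> \<sigma> < \<delta>"
    define w where "w = z + \<sigma> *\<^sub>R h"
    obtain q where qS: "q \<in> S" and qd: "infdist w S = dist w q" using infdist_attains_inf[OF cl ne] by blast
    have wz: "norm (w - z) = \<sigma>" using s h1 by (simp add: w_def)
    have dw: "infdist w S \<le> D + \<sigma>" using infdist_triangle[of w S z] wz D_def by (simp add: dist_norm)
    have "z - q = (w - q) - (w - z)" by simp
    then have "norm (z - q) \<le> norm (w - q) + norm (w - z)" by (metis norm_triangle_ineq4)
    also have "\<dots> \<le> D + 2 * \<sigma>" using dw qd wz by (simp add: dist_norm)
    finally have zq: "norm (z - q) \<le> D + 2 * \<sigma>" .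
    have s2: "2 * \<sigma> < \<eta>" "2 * \<sigma> < 1" using s unfolding \<delta>_def by auto
    have "q \<notin> K"
    proof
      assume "q \<in> K" then have "norm (z - q) \<ge> D + \<eta>" by (rule eta(2))
      then show False using zq s2 by linarith
    qed
    moreover have "q \<in> cball z (D+1)" using zq s2 by (simp add: dist_norm)
    ultimately have hq: "h \<bullet> (z - q) > D * (\<beta> - \<epsilon>/2)" using qS K_def by auto
    have Dq: "norm (z - q) \<ge> D" using infdist_le[OF qS, of z] D_def by (simp add: dist_norm)
    have "w - q = (z - q) + \<sigma> *\<^sub>R h" by (simp add: w_def algebra_simps)
    then have "(infdist w S)^2 = (norm ((z - q) + \<sigma> *\<^sub>R h))^2" using qd by (simp only: dist_norm)
    also have "\<dots> = (norm (z - q))^2 + 2 * \<sigma> * (h \<bullet> (z - q)) + \<sigma>^2"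
      by (rule norm_add_sq[OF h1])
    also have "\<dots> \<ge> D^2 + 2 * \<sigma> * (D * (\<beta> - \<epsilon>/2))"
    proof -
      have "(norm (z - q))^2 \<ge> D^2" using Dq D0 by (simp add: power_mono)
      moreover have "2 * \<sigma> * (h \<bullet> (z - q)) \<ge> 2 * \<sigma> * (D * (\<beta> - \<epsilon>/2))" using hq s by simp
      moreover have "\<sigma>^2 \<ge> 0" by simp
      ultimately show ?thesis by linarith
    qed
    finally have sq: "(infdist w S)^2 \<ge> D^2 + 2 * \<sigma> * (D * (\<beta> - \<epsilon>/2))" .
    show "infdist (z + \<sigma> *\<^sub>R h) S \<ge> infdist z S + \<sigma> * (\<beta> - \<epsilon>)"
    proof (cases "D + \<sigma> * (\<beta> - \<epsilon>) \<le> 0")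
      case True then show ?thesis using infdist_nonneg[of w S] by (simp add: D_def w_def)
    next
      case False
      have "\<sigma> * (\<beta> - \<epsilon>)^2 \<le> D * \<epsilon>"
      proof -
        have "\<sigma> * ((\<beta> - \<epsilon>)^2 + 1) \<le> D * \<epsilon>" using s unfolding \<delta>_def
          by (simp add: field_simps add_pos_nonneg)
        then show ?thesis using s by (simp add: algebra_simps)
      qed
      then have "\<sigma> * (\<sigma> * (\<beta> - \<epsilon>)^2) \<le> \<sigma> * (D * \<epsilon>)"
        using s by (simp add: mult_left_mono)
      then have "(D + \<sigma> * (\<beta> - \<epsilon>))^2 \<le> D^2 + 2 * \<sigma> * (D * (\<beta> - \<epsilon>/2))"
        by (simp add: power2_eq_square algebra_simps)
      with sq have "(D + \<sigma> * (\<beta> - \<epsilon>))^2 \<le> (infdist w S)^2" by simp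
      then have "D + \<sigma> * (\<beta> - \<epsilon>) \<le> infdist w S"
        using infdist_nonneg[of w S] by (meson power2_le_imp_le)
      then show ?thesis by (simp add: D_def w_def)
    qed
  qed
qed

lemma max_ascent:
  fixes f :: "'a::euclidean_space \<Rightarrow> real"
  assumes cont: "continuous_on (cball y l) f" and l: "l > 0" and g: "\<gamma> < \<beta>" "0 \<le> \<gamma>"
    and asc: "\<And>z. z \<in> ball y l \<Longrightarrow> f z \<ge> f y \<Longrightarrow>
        \<exists>h. norm h = 1 \<and> (\<exists>\<delta>>0. \<forall>\<sigma>. 0 < \<sigma> \<and> \<sigma> < \<delta> \<longrightarrow> f (z + \<sigma> *\<^sub>R h) \<ge> f z + \<sigma> * \<beta>)"
  shows "\<exists>z. norm (z - y) = l \<and> f z \<ge> f y + \<gamma> * l"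
proof -
  define \<phi> where "\<phi> z = f z - \<gamma> * norm (z - y)" for z
  have "continuous_on (cball y l) \<phi>" unfolding \<phi>_def by (intro continuous_intros cont)
  moreover have "cball y l \<noteq> {}" using l by simp
  ultimately obtain z0 where z0: "z0 \<in> cball y l" "\<And>z. z \<in> cball y l \<Longrightarrow> \<phi> z \<le> \<phi> z0"
    using continuous_attains_sup[OF compact_cball] by blast
  have yin: "y \<in> cball y l" using l by simp
  have "\<phi> y \<le> \<phi> z0" using z0(2)[OF yin] .
  then have fz0: "f z0 \<ge> f y + \<gamma> * norm (z0 - y)" by (simp add: \<phi>_def)
  have nz0: "norm (z0 - y) \<le> l" using z0(1) by (simp add: dist_norm norm_minus_commute)
  have "norm (z0 - y) = l"
  proof (rule ccontr)
    assume "norm (z0 - y) \<noteq> l"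
    then have lt: "norm (z0 - y) < l" using nz0 by simp
    then have zb: "z0 \<in> ball y l" by (simp add: dist_norm norm_minus_commute)
    have "f z0 \<ge> f y" using fz0 g by (smt (verit) mult_nonneg_nonneg norm_ge_zero)
    then obtain h \<delta> where h: "norm h = 1" "\<delta> > 0" "\<And>\<sigma>. 0 < \<sigma> \<and> \<sigma> < \<delta> \<Longrightarrow> f (z0 + \<sigma> *\<^sub>R h) \<ge> f z0 + \<sigma> * \<beta>"
      using asc[OF zb] by blast
    define \<sigma> where "\<sigma> = min (\<delta>/2) ((l - norm (z0 - y))/2)"
    have sp: "0 < \<sigma>" "\<sigma> < \<delta>" using h lt by (auto simp: \<sigma>_def)
    define z1 where "z1 = z0 + \<sigma> *\<^sub>R h"
    have n1: "norm (z1 - y) \<le> norm (z0 - y) + \<sigma>"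
    proof -
      have "z1 - y = (z0 - y) + \<sigma> *\<^sub>R h" by (simp add: z1_def algebra_simps)
      then have "norm (z1 - y) \<le> norm (z0 - y) + norm (\<sigma> *\<^sub>R h)" by (metis norm_triangle_ineq)
      then show ?thesis using h sp by simp
    qed
    have "\<sigma> \<le> (l - norm (z0 - y))/2" unfolding \<sigma>_def by (rule min.cobounded2)
    then have "z1 \<in> cball y l" using n1 lt by (simp add: dist_norm norm_minus_commute)
    then have "\<phi> z1 \<le> \<phi> z0" by (rule z0(2))
    moreover have "f z1 \<ge> f z0 + \<sigma> * \<beta>" using h(3)[of \<sigma>] sp by (simp add: z1_def)
    ultimately have "f z0 + \<sigma> * \<beta> - \<gamma> * (norm (z0 - y) + \<sigma>) \<le> f z0 - \<gamma> * norm (z0 - y)"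
      using n1 g(2) unfolding \<phi>_def by (smt (verit) mult_left_mono)
    then have "\<sigma> * \<beta> \<le> \<gamma> * \<sigma>" by (simp add: algebra_simps)
    then show False using g sp by (smt (verit) mult_strict_left_mono mult.commute)
  qed
  then show ?thesis using fz0 by auto
qed

lemma ray_dist:
  fixes A :: "'a::euclidean_space set"
  assumes a: "a \<in> A" and za: "norm (z - a) = infdist z A" and s: "0 \<le> s" "s \<le> norm (z - a)" and nz: "z \<noteq> a"
  shows "infdist (a + s *\<^sub>R ((z - a) /\<^sub>R norm (z - a))) A = s"
proof -
  define u where "u = (z - a) /\<^sub>R norm (z - a)"
  have u1: "norm u = 1" using nz by (simp add: u_def)
  have "infdist (a + s *\<^sub>R u) A \<le> dist (a + s *\<^sub>R u) a" by (rule infdist_le[OF a])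
  also have "\<dots> = s" using u1 s by (simp add: dist_norm)
  finally have le: "infdist (a + s *\<^sub>R u) A \<le> s" .
  have zu: "z = a + norm (z - a) *\<^sub>R u" using nz by (simp add: u_def)
  have "z - (a + s *\<^sub>R u) = (norm (z - a) - s) *\<^sub>R u" by (subst zu) (simp add: algebra_simps)
  then have dd: "dist z (a + s *\<^sub>R u) = norm (z - a) - s" using u1 s by (simp add: dist_norm)
  have "infdist z A \<le> infdist (a + s *\<^sub>R u) A + dist z (a + s *\<^sub>R u)" by (rule infdist_triangle)
  then have "s \<le> infdist (a + s *\<^sub>R u) A" using dd za by simp
  then show ?thesis using le by (simp add: u_def)
qed

lemma reach_ext:
  fixes A :: "'a::euclidean_space set"
  assumes cl: "closed A" and ne: "A \<noteq> {}" and r: "r > 0"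
    and uniq: "\<And>y. infdist y A < r \<Longrightarrow> (\<exists>!a. a \<in> A \<and> norm (y - a) = infdist y A)"
    and a: "a \<in> A" and z: "z \<notin> A" and za: "norm (z - a) = infdist z A" and zr: "infdist z A < r"
    and rho: "0 \<le> \<rho>" "\<rho> < r"
  shows "infdist (a + \<rho> *\<^sub>R ((z - a) /\<^sub>R norm (z - a))) A = \<rho>"
proof -
  have nz: "z \<noteq> a" using a z by auto
  define s0 where "s0 = norm (z - a)"
  have s0p: "s0 > 0" using nz by (simp add: s0_def)
  define u where "u = (z - a) /\<^sub>R s0"
  have u1: "norm u = 1" using nz by (simp add: u_def s0_def)
  show ?thesis
  proof (cases "\<rho> \<le> s0")
    case True then show ?thesis using ray_dist[OF a za rho(1) _ nz] by (simp add: s0_def)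
  next
    case False
    define \<tau> where "\<tau> = \<rho> - s0"
    have tp: "\<tau> > 0" using False by (simp add: \<tau>_def)
    let ?f = "\<lambda>w. infdist w A"
    have fz: "?f z = s0" using za s0_def by simp
    have key: "\<exists>w. norm (w - z) = \<tau> \<and> ?f w \<ge> s0 + \<gamma> * \<tau>" if g: "0 \<le> \<gamma>" "\<gamma> < 1" for \<gamma>
    proof -
      have "\<exists>w. norm (w - z) = \<tau> \<and> ?f w \<ge> ?f z + \<gamma> * \<tau>"
      proof (rule max_ascent[where \<beta> = "(1 + \<gamma>)/2"])
        show "continuous_on (cball z \<tau>) ?f" by (intro continuous_intros)
        show "\<tau> > 0" by (rule tp)
        show "\<gamma> < (1 + \<gamma>)/2" "0 \<le> \<gamma>" using g by auto
        fix z' assume z'b: "z' \<in> ball z \<tau>" and fz': "?f z' \<ge> ?f z"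
        have D'p: "?f z' > 0" using fz' fz s0p by simp
        have "?f z' \<le> ?f z + dist z' z" by (rule infdist_triangle)
        also have "\<dots> < s0 + \<tau>" using z'b fz by (simp add: dist_commute)
        finally have z'r: "?f z' < r" using rho by (simp add: \<tau>_def)
        obtain p where pA: "p \<in> A" and pd: "?f z' = dist z' p" using infdist_attains_inf[OF cl ne] by blast
        have pn: "norm (z' - p) = ?f z'" using pd by (simp add: dist_norm)
        define h where "h = (z' - p) /\<^sub>R ?f z'"
        have h1: "norm h = 1" using D'p pn by (simp add: h_def)
        have hyp: "h \<bullet> (z' - p') \<ge> 1 * ?f z'" if "p' \<in> A" "norm (z' - p') = ?f z'" for p'
        proof -
          have "p' = p" using uniq[OF z'r] that pA pn by blast
          then have "h \<bullet> (z' - p') = (norm (z' - p))^2 / ?f z'"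
            by (simp add: h_def dot_square_norm[symmetric] divide_inverse_commute)
          then show ?thesis using pn D'p by (simp add: power2_eq_square)
        qed
        obtain \<delta> where dl: "\<delta> > 0" "\<forall>\<sigma>. 0 < \<sigma> \<and> \<sigma> < \<delta> \<longrightarrow> ?f (z' + \<sigma> *\<^sub>R h) \<ge> ?f z' + \<sigma> * (1 - (1 - \<gamma>)/2)"
          using ascent[OF cl ne D'p h1, of "(1 - \<gamma>)/2" 1] hyp g by auto
        have "(1 - (1 - \<gamma>)/2) = (1 + \<gamma>)/2" by (simp add: field_simps)
        then show "\<exists>h. norm h = 1 \<and> (\<exists>\<delta>>0. \<forall>\<sigma>. 0 < \<sigma> \<and> \<sigma> < \<delta> \<longrightarrow> ?f (z' + \<sigma> *\<^sub>R h) \<ge> ?f z' + \<sigma> * ((1 + \<gamma>)/2))"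
          using h1 dl by metis
      qed
      then show ?thesis using fz by simp
    qed
    obtain w0 where w0: "norm (w0 - z) = \<tau>" using key[of 0] by auto
    have sne: "sphere z \<tau> \<noteq> {}" using w0 by (auto simp: dist_norm norm_minus_commute intro!: exI[of _ w0])
    have "continuous_on (sphere z \<tau>) ?f" by (intro continuous_intros)
    then obtain ws where ws: "ws \<in> sphere z \<tau>" "\<And>w. w \<in> sphere z \<tau> \<Longrightarrow> ?f w \<le> ?f ws"
      using continuous_attains_sup[OF compact_sphere sne] by blast
    have wsn: "norm (ws - z) = \<tau>" using ws(1) by (simp add: dist_norm norm_minus_commute)
    have lowg: "?f ws \<ge> s0 + \<gamma> * \<tau>" if g0: "0 \<le> \<gamma>" "\<gamma> < 1" for \<gamma>
    proof -
      obtain w where "norm (w - z) = \<tau>" "?f w \<ge> s0 + \<gamma> * \<tau>" using key[OF g0] by blast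
      moreover have "w \<in> sphere z \<tau>" using calculation by (simp add: dist_norm norm_minus_commute)
      ultimately show ?thesis using ws(2) by force
    qed
    have fws: "?f ws \<ge> s0 + \<tau>"
    proof (rule ccontr)
      assume "\<not> ?thesis"
      then have lt: "?f ws < s0 + \<tau>" by simp
      have ge0: "?f ws \<ge> s0" using lowg[of 0] by simp
      define \<gamma> where "\<gamma> = (1 + (?f ws - s0)/\<tau>)/2"
      have "(?f ws - s0)/\<tau> < 1" using lt tp by (simp add: divide_less_eq)
      moreover have "(?f ws - s0)/\<tau> \<ge> 0" using ge0 tp by simp
      ultimately have g: "0 \<le> \<gamma>" "\<gamma> < 1" by (auto simp: \<gamma>_def)
      have "s0 + \<gamma> * \<tau> = s0 + \<tau>/2 + (?f ws - s0)/2" using tp by (simp add: \<gamma>_def field_simps)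
      also have "\<dots> > ?f ws" using lt by (simp add: field_simps)
      finally show False using lowg[OF g] by simp
    qed
    have "ws - a = (ws - z) + (z - a)" by simp
    then have tri: "norm (ws - a) \<le> norm (ws - z) + norm (z - a)" by (metis norm_triangle_ineq)
    have "?f ws \<le> dist ws a" by (rule infdist_le[OF a])
    then have fle: "?f ws \<le> norm (ws - a)" by (simp add: dist_norm)
    have eq: "norm ((ws - z) + (z - a)) = norm (ws - z) + norm (z - a)"
      using tri fle fws wsn s0_def by simp
    then have "norm (ws - z) *\<^sub>R (z - a) = norm (z - a) *\<^sub>R (ws - z)" by (simp only: norm_triangle_eq)
    then have eqn: "\<tau> *\<^sub>R (z - a) = s0 *\<^sub>R (ws - z)" using wsn s0_def by simp
    have "ws - z = (1/s0) *\<^sub>R (s0 *\<^sub>R (ws - z))" using s0p by simp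
    also have "\<dots> = (1/s0) *\<^sub>R (\<tau> *\<^sub>R (z - a))" using eqn by simp
    also have "\<dots> = \<tau> *\<^sub>R u" by (simp add: u_def divide_inverse_commute)
    finally have "ws - z = \<tau> *\<^sub>R u" .
    then have wsa: "ws = a + \<rho> *\<^sub>R u"
      using nz by (simp add: u_def s0_def \<tau>_def algebra_simps)
    have "?f ws = \<rho>" using tri fle fws wsn s0_def by (simp add: \<tau>_def)
    then show ?thesis using wsa by (simp add: u_def s0_def)
  qed
qed

lemma reach_Q:
  fixes A :: "'a::euclidean_space set"
  assumes "infdist (a + \<rho> *\<^sub>R u) A = \<rho>" "norm u = 1" "b \<in> A"
  shows "2 * \<rho> * (u \<bullet> (b - a)) \<le> (norm (b - a))^2"
proof -
  have "\<rho> \<le> dist (a + \<rho> *\<^sub>R u) b" using infdist_le[OF assms(3), of "a + \<rho> *\<^sub>R u"] assms(1) by simp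
  then have le: "\<rho> \<le> norm ((a - b) + \<rho> *\<^sub>R u)" by (simp add: dist_norm algebra_simps)
  have "\<rho>^2 \<le> (norm ((a - b) + \<rho> *\<^sub>R u))^2"
  proof (cases "\<rho> \<ge> 0")
    case True then show ?thesis using le by (simp add: power_mono)
  next
    case False
    then have "\<rho> = infdist (a + \<rho> *\<^sub>R u) A" using assms(1) by simp
    then show ?thesis using False infdist_nonneg[of "a + \<rho> *\<^sub>R u" A] by simp
  qed
  also have "\<dots> = (norm (a - b))^2 + 2 * \<rho> * (u \<bullet> (a - b)) + \<rho>^2" by (rule norm_add_sq[OF assms(2)])
  finally have "0 \<le> (norm (a - b))^2 + 2 * \<rho> * (u \<bullet> (a - b))" by simp
  moreover have "u \<bullet> (a - b) = - (u \<bullet> (b - a))" by (simp add: inner_diff_right)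
  ultimately show ?thesis by (simp add: norm_minus_commute)
qed

lemma Q_nor:
  fixes A :: "'a::euclidean_space set"
  assumes rp: "\<rho> > 0" and Q: "\<And>b. b \<in> A \<Longrightarrow> 2 * \<rho> * (u \<bullet> (b - x)) \<le> (norm (b - x))^2"
  shows "u \<in> nor_cone A x"
  unfolding nor_cone_def polar_cone_def tan_cone_def Let_def
proof (intro CollectI ballI)
  fix b assume "b \<in> {0} \<union> {t *\<^sub>R l |t l. 0 \<le> t \<and> l \<in> {u. \<exists>xs. (\<forall>n. xs n \<in> A - {x}) \<and> xs \<longlonglongrightarrow> x \<and>
                       (\<lambda>n. (1 / norm (xs n - x)) *\<^sub>R (xs n - x)) \<longlonglongrightarrow> u}}"
  then consider "b = 0" | t l xs where "b = t *\<^sub>R l" "0 \<le> t" "\<forall>n. xs n \<in> A - {x}" "xs \<longlonglongrightarrow> x"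
      "(\<lambda>n. (1 / norm (xs n - x)) *\<^sub>R (xs n - x)) \<longlonglongrightarrow> l" by blast
  then show "u \<bullet> b \<le> 0"
  proof cases
    case 1 then show ?thesis by simp
  next
    case 2
    have "u \<bullet> l \<le> 0"
    proof (rule LIMSEQ_le)
      show "(\<lambda>n. u \<bullet> ((1 / norm (xs n - x)) *\<^sub>R (xs n - x))) \<longlonglongrightarrow> u \<bullet> l"
        by (intro tendsto_intros 2(5))
      have "(\<lambda>n. xs n - x) \<longlonglongrightarrow> 0" using 2(4) by (simp add: LIM_zero)
      then have "(\<lambda>n. norm (xs n - x)) \<longlonglongrightarrow> 0" by (simp add: tendsto_norm_zero)
      then show "(\<lambda>n. norm (xs n - x) / (2 * \<rho>)) \<longlonglongrightarrow> 0"
        using tendsto_divide_zero by blast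
      show "\<exists>N. \<forall>n\<ge>N. u \<bullet> ((1 / norm (xs n - x)) *\<^sub>R (xs n - x)) \<le> norm (xs n - x) / (2 * \<rho>)"
      proof (intro exI allI impI)
        fix n
        have xa: "xs n \<in> A" "xs n \<noteq> x" using 2(3) by auto
        then have np: "norm (xs n - x) > 0" by simp
        have "2 * \<rho> * (u \<bullet> (xs n - x)) \<le> (norm (xs n - x))^2" by (rule Q[OF xa(1)])
        then have "u \<bullet> (xs n - x) \<le> (norm (xs n - x))^2 / (2 * \<rho>)" using rp by (simp add: field_simps)
        then have "u \<bullet> (xs n - x) / norm (xs n - x) \<le> (norm (xs n - x))^2 / (2 * \<rho>) / norm (xs n - x)"
          using np by (intro divide_right_mono) auto
        also have "\<dots> = norm (xs n - x) / (2 * \<rho>)"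
        proof -
          have "(norm (xs n - x))^2 / (2 * \<rho>) / norm (xs n - x) = (norm (xs n - x) * norm (xs n - x)) / (norm (xs n - x) * (2 * \<rho>))"
            by (simp add: power2_eq_square mult.commute)
          also have "\<dots> = norm (xs n - x) / (2 * \<rho>)" using np by (subst mult_divide_mult_cancel_left) auto
          finally show ?thesis .
        qed
        finally have "u \<bullet> (xs n - x) / norm (xs n - x) \<le> norm (xs n - x) / (2 * \<rho>)" .
        moreover have "u \<bullet> ((1 / norm (xs n - x)) *\<^sub>R (xs n - x)) = u \<bullet> (xs n - x) / norm (xs n - x)"
          by simp
        ultimately show "u \<bullet> ((1 / norm (xs n - x)) *\<^sub>R (xs n - x)) \<le> norm (xs n - x) / (2 * \<rho>)"
          by simp
      qed
    qed
    then show ?thesis using 2(1,2) by (simp add: mult_nonneg_nonpos)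
  qed
qed

lemma closed_polar: "closed (polar_cone B)"
proof -
  have "polar_cone B = (\<Inter>b\<in>B. {u. inner b u \<le> 0})" by (auto simp: polar_cone_def inner_commute)
  moreover have "closed (\<Inter>b\<in>B. {u. inner b u \<le> 0})"
    by (rule closed_INT) (simp add: closed_halfspace_le)
  ultimately show ?thesis by simp
qed

lemma compact_N: "compact (nor_cone A x \<inter> sphere 0 1)"
  unfolding nor_cone_def by (rule closed_Int_compact[OF closed_polar compact_sphere])

lemma frechet_unif:
  fixes A :: "'a::euclidean_space set"
  assumes ep: "\<epsilon> > 0"
  shows "\<exists>\<delta>>0. \<forall>n\<in>nor_cone A x \<inter> sphere 0 1. \<forall>a\<in>A. norm (a - x) < \<delta> \<longrightarrow> n \<bullet> (a - x) \<le> \<epsilon> * norm (a - x)"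
proof (rule ccontr)
  define N where "N = nor_cone A x \<inter> sphere 0 1"
  assume neg: "\<not> ?thesis"
  have ex: "\<exists>n a. n \<in> N \<and> a \<in> A \<and> norm (a - x) < 1 / real (Suc k) \<and> n \<bullet> (a - x) > \<epsilon> * norm (a - x)" for k
  proof -
    have "1 / real (Suc k) > 0" by simp
    then have "\<not> (\<forall>n\<in>N. \<forall>a\<in>A. norm (a - x) < 1 / real (Suc k) \<longrightarrow> n \<bullet> (a - x) \<le> \<epsilon> * norm (a - x))"
      using neg unfolding N_def by blast
    then show ?thesis by (simp add: not_le) blast
  qed
  have "\<forall>k. \<exists>q. fst q \<in> N \<and> snd q \<in> A \<and> norm (snd q - x) < 1 / real (Suc k) \<and> fst q \<bullet> (snd q - x) > \<epsilon> * norm (snd q - x)"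
    using ex by simp
  then obtain f where f: "\<forall>k. fst (f k) \<in> N \<and> snd (f k) \<in> A \<and> norm (snd (f k) - x) < 1 / real (Suc k) \<and> fst (f k) \<bullet> (snd (f k) - x) > \<epsilon> * norm (snd (f k) - x)"
    by (rule choice[THEN exE])
  define nn where "nn k = fst (f k)" for k
  define aa where "aa k = snd (f k)" for k
  have H: "nn k \<in> N \<and> aa k \<in> A \<and> norm (aa k - x) < 1 / real (Suc k) \<and> nn k \<bullet> (aa k - x) > \<epsilon> * norm (aa k - x)" for k
    using f by (simp add: nn_def aa_def)
  have ax: "aa k \<noteq> x" for k using H[of k] ep by auto
  define dd where "dd k = (1 / norm (aa k - x)) *\<^sub>R (aa k - x)" for k
  have dd1: "dd k \<in> sphere 0 1" for k using ax[of k] by (simp add: dd_def)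
  have ndd: "nn k \<bullet> dd k > \<epsilon>" for k
  proof -
    have np: "norm (aa k - x) > 0" using ax[of k] by simp
    have "nn k \<bullet> dd k = (nn k \<bullet> (aa k - x)) / norm (aa k - x)" by (simp add: dd_def)
    moreover have "(nn k \<bullet> (aa k - x)) / norm (aa k - x) > \<epsilon>" using H[of k] np by (simp add: field_simps)
    ultimately show ?thesis by simp
  qed
  have cp: "compact (N \<times> sphere (0::'a) 1)" unfolding N_def by (intro compact_Times compact_N compact_sphere)
  have "(nn k, dd k) \<in> N \<times> sphere 0 1" for k
  proof (rule SigmaI)
    show "nn k \<in> N" using H[of k] by blast
    show "dd k \<in> sphere 0 1" by (rule dd1)
  qed
  then have "\<forall>k. (nn k, dd k) \<in> N \<times> sphere 0 1" by blast
  then obtain l \<sigma> where l: "l \<in> N \<times> sphere 0 1" "strict_mono \<sigma>" "((\<lambda>k. (nn k, dd k)) \<circ> \<sigma>) \<longlonglongrightarrow> l"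
    by (rule seq_compactE[OF compact_imp_seq_compact[OF cp]])
  have t1: "(\<lambda>k. nn (\<sigma> k)) \<longlonglongrightarrow> fst l" using tendsto_fst[OF l(3)] by (simp add: o_def)
  have t2: "(\<lambda>k. dd (\<sigma> k)) \<longlonglongrightarrow> snd l" using tendsto_snd[OF l(3)] by (simp add: o_def)
  have "(\<lambda>k. aa k - x) \<longlonglongrightarrow> 0" by (rule LIMSEQ_norm_0) (use H in blast)
  then have "aa \<longlonglongrightarrow> x" by (simp add: LIM_zero_iff)
  then have t3: "(\<lambda>k. aa (\<sigma> k)) \<longlonglongrightarrow> x" using LIMSEQ_subseq_LIMSEQ[OF _ l(2)] by (simp add: o_def)
  have "snd l \<in> tan_cone A x"
    unfolding tan_cone_def Let_def
  proof (rule UnI2, rule CollectI, intro exI conjI)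
    show "snd l = 1 *\<^sub>R snd l" by simp
    show "(0::real) \<le> 1" by simp
    show "snd l \<in> {u. \<exists>xs. (\<forall>n. xs n \<in> A - {x}) \<and> xs \<longlonglongrightarrow> x \<and> (\<lambda>n. (1 / norm (xs n - x)) *\<^sub>R (xs n - x)) \<longlonglongrightarrow> u}"
    proof (intro CollectI exI[of _ "\<lambda>k. aa (\<sigma> k)"] conjI allI)
      fix n show "aa (\<sigma> n) \<in> A - {x}" using H[of "\<sigma> n"] ax[of "\<sigma> n"] by simp
    next
      show "(\<lambda>k. aa (\<sigma> k)) \<longlonglongrightarrow> x" by (rule t3)
      show "(\<lambda>n. (1 / norm (aa (\<sigma> n) - x)) *\<^sub>R (aa (\<sigma> n) - x)) \<longlonglongrightarrow> snd l"
        using t2 by (simp add: dd_def)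
    qed
  qed
  moreover have "fst l \<in> nor_cone A x" using l(1) by (simp add: N_def mem_Times_iff)
  ultimately have le0: "fst l \<bullet> snd l \<le> 0" by (simp add: nor_cone_def polar_cone_def)
  have "(\<lambda>k. nn (\<sigma> k) \<bullet> dd (\<sigma> k)) \<longlonglongrightarrow> fst l \<bullet> snd l" by (intro tendsto_intros t1 t2)
  then have "\<epsilon> \<le> fst l \<bullet> snd l" by (rule LIMSEQ_le_const) (use ndd less_imp_le in blast)
  then show False using le0 ep by simp
qed

lemma Q_seq:
  fixes A :: "'a::euclidean_space set"
  assumes aa: "aa \<longlonglongrightarrow> x" and u1: "\<And>k. norm (uu k) = 1"
    and Q: "\<And>k b. b \<in> A \<Longrightarrow> 2 * \<rho> * (uu k \<bullet> (b - aa k)) \<le> (norm (b - aa k))^2"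
  shows "\<exists>u \<sigma>. strict_mono \<sigma> \<and> (uu \<circ> \<sigma>) \<longlonglongrightarrow> u \<and> norm u = 1 \<and> (\<forall>b\<in>A. 2 * \<rho> * (u \<bullet> (b - x)) \<le> (norm (b - x))^2)"
proof -
  have "\<forall>k. uu k \<in> sphere (0::'a) 1" using u1 by simp
  then obtain u \<sigma> where l: "u \<in> sphere 0 1" "strict_mono \<sigma>" "(uu \<circ> \<sigma>) \<longlonglongrightarrow> u"
    by (rule seq_compactE[OF compact_imp_seq_compact[OF compact_sphere]])
  have t3: "(\<lambda>k. aa (\<sigma> k)) \<longlonglongrightarrow> x" using LIMSEQ_subseq_LIMSEQ[OF aa l(2)] by (simp add: o_def)
  have t1: "(\<lambda>k. uu (\<sigma> k)) \<longlonglongrightarrow> u" using l(3) by (simp add: o_def)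
  have "2 * \<rho> * (u \<bullet> (b - x)) \<le> (norm (b - x))^2" if b: "b \<in> A" for b
  proof (rule LIMSEQ_le)
    show "(\<lambda>k. 2 * \<rho> * (uu (\<sigma> k) \<bullet> (b - aa (\<sigma> k)))) \<longlonglongrightarrow> 2 * \<rho> * (u \<bullet> (b - x))"
      by (intro tendsto_intros t1 t3)
    show "(\<lambda>k. (norm (b - aa (\<sigma> k)))^2) \<longlonglongrightarrow> (norm (b - x))^2"
      by (intro tendsto_intros t3)
    show "\<exists>N. \<forall>n\<ge>N. 2 * \<rho> * (uu (\<sigma> n) \<bullet> (b - aa (\<sigma> n))) \<le> (norm (b - aa (\<sigma> n)))^2"
      using Q[OF b] by blast
  qed
  then show ?thesis using l by auto
qed

lemma dist_fun_eq: "dist_fun X = (\<lambda>w. infdist w X)"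
  by (rule ext) (simp add: dist_fun_def)

lemma clarke_dir:
  fixes X :: "'a::euclidean_space set"
  assumes cl: "closed X" and ne: "X \<noteq> {}" and Dp: "infdist z X > 0"
    and De: "Delta (clarke_grad (dist_fun X) z) \<ge> \<mu>" and mp: "\<mu> > 0"
  shows "\<exists>h. norm h = 1 \<and> (\<forall>p\<in>X. norm (z - p) = infdist z X \<longrightarrow> h \<bullet> (z - p) \<ge> \<mu> * infdist z X)"
proof -
  define D where "D = infdist z X"
  have D0: "D > 0" using Dp D_def by simp
  define P where "P = X \<inter> sphere z D"
  have Pe: "p \<in> P \<longleftrightarrow> p \<in> X \<and> norm (z - p) = D" for p by (simp add: P_def dist_norm)
  have cP: "compact P" unfolding P_def by (rule closed_Int_compact[OF cl compact_sphere])
  obtain p0 where "p0 \<in> X" "infdist z X = dist z p0" using infdist_attains_inf[OF cl ne] by blast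
  then have p0P: "p0 \<in> P" using Pe D_def by (simp add: dist_norm)
  define G where "G = (\<lambda>p. (z - p) /\<^sub>R D) ` P"
  have cG: "compact G" unfolding G_def by (intro compact_continuous_image continuous_intros cP)
  define C where "C = convex hull G"
  have cC: "compact C" unfolding C_def by (rule compact_convex_hull[OF cG])
  have vC: "convex C" unfolding C_def by simp
  have neC: "C \<noteq> {}" using p0P by (auto simp: C_def G_def hull_inc)
  have Gsub: "G \<subseteq> {l. \<exists>ys g. ys \<longlonglongrightarrow> z \<and> (\<forall>i. (dist_fun X has_derivative (\<lambda>h. g i \<bullet> h)) (at (ys i))) \<and> g \<longlonglongrightarrow> l}"
  proof
    fix l assume "l \<in> G"
    then obtain p where pP: "p \<in> P" and lp: "l = (z - p) /\<^sub>R D" by (auto simp: G_def)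
    have pX: "p \<in> X" and pn: "norm (z - p) = infdist z X" using pP Pe D_def by auto
    define th where "th i = 1 - 1 / (real i + 2)" for i :: nat
    have th: "0 < th i" "th i < 1" for i by (auto simp: th_def field_simps)
    have "(\<lambda>i. 1 / (real i + 2)) \<longlonglongrightarrow> 0"
      by (rule LIMSEQ_norm_0) (simp add: field_simps)
    then have "th \<longlonglongrightarrow> 1 - 0"
      unfolding th_def by (intro tendsto_intros)
    then have "(\<lambda>i. p + th i *\<^sub>R (z - p)) \<longlonglongrightarrow> p + (1 - 0) *\<^sub>R (z - p)" by (intro tendsto_intros)
    then have ys: "(\<lambda>i. p + th i *\<^sub>R (z - p)) \<longlonglongrightarrow> z" by simp
    show "l \<in> {l. \<exists>ys g. ys \<longlonglongrightarrow> z \<and> (\<forall>i. (dist_fun X has_derivative (\<lambda>h. g i \<bullet> h)) (at (ys i))) \<and> g \<longlonglongrightarrow> l}"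
    proof (intro CollectI exI conjI allI)
      show "(\<lambda>i. p + th i *\<^sub>R (z - p)) \<longlonglongrightarrow> z" by (rule ys)
      show "(\<lambda>i. l) \<longlonglongrightarrow> l" by simp
      fix i
      show "(dist_fun X has_derivative (\<lambda>h. l \<bullet> h)) (at (p + th i *\<^sub>R (z - p)))"
        unfolding dist_fun_eq lp D_def using dist_deriv[OF pX pn Dp th(1)[of i] th(2)[of i]] .
    qed
  qed
  have Csub: "C \<subseteq> clarke_grad (dist_fun X) z" unfolding C_def clarke_grad_def by (rule hull_mono[OF Gsub])
  have normC: "norm c \<ge> \<mu>" if "c \<in> C" for c
  proof -
    have "Delta (clarke_grad (dist_fun X) z) \<le> norm c"
      unfolding Delta_def
    proof (rule cInf_lower)
      show "norm c \<in> norm ` clarke_grad (dist_fun X) z" using that Csub by blast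
      show "bdd_below (norm ` clarke_grad (dist_fun X) z)" by (rule bdd_belowI[of _ 0]) auto
    qed
    then show ?thesis using De by simp
  qed
  obtain g where gC: "g \<in> C" and gmin: "\<And>c. c \<in> C \<Longrightarrow> dist 0 g \<le> dist 0 c"
    using distance_attains_inf[OF compact_imp_closed[OF cC] neC, of 0] by blast
  have gdot: "c \<bullet> g \<ge> (norm g)^2" if "c \<in> C" for c
  proof -
    have "inner (0 - g) (c - g) \<le> 0"
      by (rule any_closest_point_dot[OF vC compact_imp_closed[OF cC] gC that]) (use gmin in blast)
    then show ?thesis by (simp add: inner_diff_right inner_commute dot_square_norm)
  qed
  have gn: "norm g \<ge> \<mu>" using normC[OF gC] .
  define h where "h = g /\<^sub>R norm g"
  have gnz: "norm g \<noteq> 0" using gn mp by linarith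
  have h1: "norm h = 1" using gnz by (simp add: h_def)
  show ?thesis
  proof (intro exI[of _ h] conjI h1 ballI impI)
    fix p assume pX: "p \<in> X" and pn: "norm (z - p) = infdist z X"
    have "(z - p) /\<^sub>R D \<in> C" using pX pn Pe D_def by (auto simp: C_def G_def intro!: hull_inc)
    then have "((z - p) /\<^sub>R D) \<bullet> g \<ge> (norm g)^2" by (rule gdot)
    moreover have "((z - p) /\<^sub>R D) \<bullet> g = ((z - p) \<bullet> g) / D"
      by (simp only: inner_scaleR_left) (simp add: divide_inverse mult.commute)
    ultimately have "(norm g)^2 \<le> ((z - p) \<bullet> g) / D" by simp
    then have "(z - p) \<bullet> g \<ge> D * (norm g)^2" using D0 by (simp add: le_divide_eq mult.commute)
    then have "D * (norm g)^2 / norm g \<le> ((z - p) \<bullet> g) / norm g" using gn mp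
      by (intro divide_right_mono) auto
    moreover have "h \<bullet> (z - p) = ((z - p) \<bullet> g) / norm g"
      by (simp only: h_def inner_scaleR_left) (simp add: divide_inverse mult.commute inner_commute)
    ultimately have "h \<bullet> (z - p) \<ge> D * (norm g)^2 / norm g" by simp
    also have "D * (norm g)^2 / norm g = D * norm g" by (simp add: power2_eq_square)
    finally have "h \<bullet> (z - p) \<ge> D * norm g" .
    moreover have "D * norm g \<ge> \<mu> * D" using gn D0 by (simp add: mult.commute mult_left_mono)
    ultimately show "h \<bullet> (z - p) \<ge> \<mu> * infdist z X" using D_def by simp
  qed
qed

lemma near_normals:
  fixes A :: "'a::euclidean_space set"
  assumes cl: "closed A" and ne: "A \<noteq> {}" and r: "r > 0"
    and uniq: "\<And>y. infdist y A < r \<Longrightarrow> (\<exists>!a. a \<in> A \<and> norm (y - a) = infdist y A)"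
    and xA: "x \<in> A"
    and zA: "\<And>k. zz k \<notin> A" and zx: "\<And>k. norm (zz k - x) < min r 1 / 2 / real (Suc k)"
    and aA: "\<And>k. aa k \<in> A" and za: "\<And>k. norm (zz k - aa k) = infdist (zz k) A"
  shows "\<exists>u \<sigma>. strict_mono \<sigma> \<and> ((\<lambda>k. (zz k - aa k) /\<^sub>R norm (zz k - aa k)) \<circ> \<sigma>) \<longlonglongrightarrow> u \<and> u \<in> nor_cone A x \<inter> sphere 0 1"
proof -
  have c1: "min r 1 / 2 / real (Suc k) \<le> r / 2" for k
  proof -
    have "min r 1 / 2 / real (Suc k) \<le> min r 1 / 2 / 1" by (rule divide_left_mono) (use r in auto)
    then show ?thesis by linarith
  qed
  have c2: "2 * (min r 1 / 2 / real (Suc k)) \<le> 1 / real (Suc k)" for k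
  proof -
    have "2 * (min r 1 / 2 / real (Suc k)) = min r 1 / real (Suc k)" by (simp add: field_simps)
    also have "\<dots> \<le> 1 / real (Suc k)" by (rule divide_right_mono) auto
    finally show ?thesis .
  qed
  have idr: "infdist (zz k) A < r" for k
  proof -
    have "infdist (zz k) A \<le> dist (zz k) x" by (rule infdist_le[OF xA])
    moreover have "norm (zz k - x) < r / 2" using zx[of k] c1[of k] by linarith
    ultimately show ?thesis using r by (simp add: dist_norm)
  qed
  define uu where "uu k = (zz k - aa k) /\<^sub>R norm (zz k - aa k)" for k
  have nz: "zz k \<noteq> aa k" for k using zA[of k] aA[of k] by auto
  have u1: "norm (uu k) = 1" for k using nz[of k] by (simp add: uu_def)
  have Q: "2 * (r/2) * (uu k \<bullet> (b - aa k)) \<le> (norm (b - aa k))^2" if "b \<in> A" for k b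
  proof -
    have "infdist (aa k + (r/2) *\<^sub>R uu k) A = r/2"
      unfolding uu_def using reach_ext[OF cl ne r uniq aA[of k] zA[of k] za[of k] idr[of k], of "r/2"] r by simp
    then show ?thesis by (rule reach_Q[OF _ u1 that])
  qed
  have "(\<lambda>k. aa k - x) \<longlonglongrightarrow> 0"
  proof (rule LIMSEQ_norm_0)
    fix k
    have "aa k - x = (aa k - zz k) + (zz k - x)" by simp
    then have "norm (aa k - x) \<le> norm (aa k - zz k) + norm (zz k - x)" by (metis norm_triangle_ineq)
    moreover have "norm (aa k - zz k) \<le> norm (zz k - x)"
    proof -
      have "infdist (zz k) A \<le> dist (zz k) x" by (rule infdist_le[OF xA])
      then show ?thesis using za[of k] by (simp add: dist_norm norm_minus_commute)
    qed
    ultimately have "norm (aa k - x) \<le> 2 * norm (zz k - x)" by simp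
    also have "\<dots> < 2 * (min r 1 / 2 / real (Suc k))" using zx[of k] by simp
    also have "\<dots> \<le> 1 / real (Suc k)" by (rule c2)
    finally show "norm (aa k - x) < 1 / real (Suc k)" .
  qed
  then have "aa \<longlonglongrightarrow> x" by (simp add: LIM_zero_iff)
  from Q_seq[OF this u1 Q] obtain u \<sigma> where us: "strict_mono \<sigma>" "(uu \<circ> \<sigma>) \<longlonglongrightarrow> u" "norm u = 1"
    "\<forall>b\<in>A. 2 * (r/2) * (u \<bullet> (b - x)) \<le> (norm (b - x))^2" by blast
  have "u \<in> nor_cone A x"
    by (rule Q_nor[of "r/2"]) (use r us(4) in auto)
  then show ?thesis using us unfolding uu_def by (intro exI[of _ u] exI[of _ \<sigma>]) auto
qed

locale sett =
  fixes X A :: "'a::euclidean_space set" and x :: 'a and r s \<mu> :: real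
  assumes clX: "closed X" and neX: "X \<noteq> {}" and xX: "x \<in> X"
    and Aeq: "A = - interior X" and clint: "closure (interior X) = X"
    and xA: "x \<in> A" and r: "r > 0"
    and uniq: "\<And>y. infdist y A < r \<Longrightarrow> (\<exists>!a. a \<in> A \<and> norm (y - a) = infdist y A)"
    and s: "s > 0"
    and muc: "\<And>y. 0 < infdist y X \<Longrightarrow> infdist y X \<le> s \<Longrightarrow> Delta (clarke_grad (dist_fun X) y) \<ge> \<mu>"
    and mu: "0 < \<mu>" "\<mu> \<le> 1"
    and xcl: "x \<in> closure (- X)"
begin

lemma clA: "closed A" unfolding Aeq by (simp add: closed_Compl)
lemma neA: "A \<noteq> {}" using xA by auto

lemma seqs:
  assumes "\<And>k. \<exists>q a. q \<notin> A \<and> norm (q - x) < min r 1 / 2 / real (Suc k) \<and> a \<in> A \<and> norm (q - a) = infdist q A \<and> P k q a"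
  shows "\<exists>zz aa. (\<forall>k. zz k \<notin> A \<and> norm (zz k - x) < min r 1 / 2 / real (Suc k) \<and> aa k \<in> A \<and> norm (zz k - aa k) = infdist (zz k) A \<and> P k (zz k) (aa k))"
proof -
  have "\<forall>k. \<exists>qa. fst qa \<notin> A \<and> norm (fst qa - x) < min r 1 / 2 / real (Suc k) \<and> snd qa \<in> A \<and> norm (fst qa - snd qa) = infdist (fst qa) A \<and> P k (fst qa) (snd qa)"
    using assms by simp
  then obtain f where f: "\<forall>k. fst (f k) \<notin> A \<and> norm (fst (f k) - x) < min r 1 / 2 / real (Suc k) \<and> snd (f k) \<in> A \<and> norm (fst (f k) - snd (f k)) = infdist (fst (f k)) A \<and> P k (fst (f k)) (snd (f k))"
    by (rule choice[THEN exE])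
  show ?thesis by (rule exI[of _ "\<lambda>k. fst (f k)"], rule exI[of _ "\<lambda>k. snd (f k)"]) (use f in blast)
qed

lemma N_ne: "nor_cone A x \<inter> sphere 0 1 \<noteq> {}"
proof -
  have "\<exists>q a. q \<notin> A \<and> norm (q - x) < min r 1 / 2 / real (Suc k) \<and> a \<in> A \<and> norm (q - a) = infdist q A \<and> True" for k
  proof -
    have ep: "min r 1 / 2 / real (Suc k) > 0" using r by simp
    have "x \<in> closure (interior X)" using clint xX by simp
    then obtain q where q: "q \<in> interior X" "dist q x < min r 1 / 2 / real (Suc k)"
      using ep unfolding closure_approachable by blast
    obtain a where a: "a \<in> A" "infdist q A = dist q a" using infdist_attains_inf[OF clA neA] by blast
    show ?thesis using q a Aeq by (intro exI[of _ q] exI[of _ a]) (auto simp: dist_norm)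
  qed
  then obtain zz aa where H: "\<forall>k. zz k \<notin> A \<and> norm (zz k - x) < min r 1 / 2 / real (Suc k) \<and> aa k \<in> A \<and> norm (zz k - aa k) = infdist (zz k) A \<and> True"
    using seqs[of "\<lambda>_ _ _. True"] by blast
  have "\<exists>u \<sigma>. strict_mono \<sigma> \<and> ((\<lambda>k. (zz k - aa k) /\<^sub>R norm (zz k - aa k)) \<circ> \<sigma>) \<longlonglongrightarrow> u \<and> u \<in> nor_cone A x \<inter> sphere 0 1"
    by (rule near_normals[OF clA neA r uniq xA]) (use H in blast)+
  then show ?thesis by blast
qed

lemma lower_normals:
  assumes vN: "\<And>n. n \<in> nor_cone A x \<inter> sphere 0 1 \<Longrightarrow> n \<bullet> v \<ge> c" and ep: "\<epsilon> > 0"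
  shows "\<exists>\<delta>>0. \<forall>q a. q \<notin> A \<longrightarrow> norm (q - x) < \<delta> \<longrightarrow> a \<in> A \<longrightarrow> norm (q - a) = infdist q A \<longrightarrow>
            ((q - a) /\<^sub>R norm (q - a)) \<bullet> v \<ge> c - \<epsilon>"
proof (rule ccontr)
  assume neg: "\<not> ?thesis"
  have "\<exists>q a. q \<notin> A \<and> norm (q - x) < min r 1 / 2 / real (Suc k) \<and> a \<in> A \<and> norm (q - a) = infdist q A \<and>
          ((q - a) /\<^sub>R norm (q - a)) \<bullet> v < c - \<epsilon>" for k
  proof -
    have "min r 1 / 2 / real (Suc k) > 0" using r by simp
    then have "\<not> (\<forall>q a. q \<notin> A \<longrightarrow> norm (q - x) < min r 1 / 2 / real (Suc k) \<longrightarrow> a \<in> A \<longrightarrow> norm (q - a) = infdist q A \<longrightarrow>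
            ((q - a) /\<^sub>R norm (q - a)) \<bullet> v \<ge> c - \<epsilon>)" using neg by blast
    then obtain q a where "q \<notin> A" "norm (q - x) < min r 1 / 2 / real (Suc k)" "a \<in> A" "norm (q - a) = infdist q A"
      "\<not> ((q - a) /\<^sub>R norm (q - a)) \<bullet> v \<ge> c - \<epsilon>" by blast
    then show ?thesis by (intro exI[of _ q] exI[of _ a]) (simp add: not_le)
  qed
  then obtain zz aa where H: "\<forall>k. zz k \<notin> A \<and> norm (zz k - x) < min r 1 / 2 / real (Suc k) \<and> aa k \<in> A \<and> norm (zz k - aa k) = infdist (zz k) A \<and>
          ((zz k - aa k) /\<^sub>R norm (zz k - aa k)) \<bullet> v < c - \<epsilon>"
    using seqs[of "\<lambda>k q a. ((q - a) /\<^sub>R norm (q - a)) \<bullet> v < c - \<epsilon>"] by blast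
  have "\<exists>u \<sigma>. strict_mono \<sigma> \<and> ((\<lambda>k. (zz k - aa k) /\<^sub>R norm (zz k - aa k)) \<circ> \<sigma>) \<longlonglongrightarrow> u \<and> u \<in> nor_cone A x \<inter> sphere 0 1"
    by (rule near_normals[OF clA neA r uniq xA]) (use H in blast)+
  then obtain u \<sigma> where u: "((\<lambda>k. (zz k - aa k) /\<^sub>R norm (zz k - aa k)) \<circ> \<sigma>) \<longlonglongrightarrow> u" "u \<in> nor_cone A x \<inter> sphere 0 1"
    by blast
  have "(\<lambda>k. (((\<lambda>k. (zz k - aa k) /\<^sub>R norm (zz k - aa k)) \<circ> \<sigma>) k) \<bullet> v) \<longlonglongrightarrow> u \<bullet> v"
    by (intro tendsto_intros u(1))
  then have "u \<bullet> v \<le> c - \<epsilon>"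
  proof (rule LIMSEQ_le_const2)
    show "\<exists>N. \<forall>n\<ge>N. (((\<lambda>k. (zz k - aa k) /\<^sub>R norm (zz k - aa k)) \<circ> \<sigma>) n) \<bullet> v \<le> c - \<epsilon>"
    proof (intro exI allI impI)
      fix n
      have "((zz (\<sigma> n) - aa (\<sigma> n)) /\<^sub>R norm (zz (\<sigma> n) - aa (\<sigma> n))) \<bullet> v < c - \<epsilon>" using H by blast
      then show "(((\<lambda>k. (zz k - aa k) /\<^sub>R norm (zz k - aa k)) \<circ> \<sigma>) n) \<bullet> v \<le> c - \<epsilon>" by simp
    qed
  qed
  moreover have "u \<bullet> v \<ge> c" by (rule vN[OF u(2)])
  ultimately show False using ep by simp
qed

end

context sett begin

lemma ascent_step:
  assumes yp: "infdist y X > 0" and yx: "norm (y - x) \<le> t" and tp: "t > 0" and ts: "2 * t \<le> s"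
    and g: "0 \<le> \<gamma>" "\<gamma> < \<mu>"
  shows "\<exists>z. norm (z - y) = t \<and> infdist z X \<ge> infdist y X + \<gamma> * t"
proof (rule max_ascent[where \<beta> = "\<mu> - (\<mu> - \<gamma>)/2"])
  show "continuous_on (cball y t) (\<lambda>w. infdist w X)" by (intro continuous_intros)
  show "t > 0" by (rule tp)
  show "\<gamma> < \<mu> - (\<mu> - \<gamma>)/2" "0 \<le> \<gamma>" using g by (auto simp: field_simps)
  fix z assume zb: "z \<in> ball y t" and fz: "infdist z X \<ge> infdist y X"
  have zp: "infdist z X > 0" using fz yp by simp
  have "infdist z X \<le> infdist y X + dist z y" by (rule infdist_triangle)
  moreover have "infdist y X \<le> dist y x" by (rule infdist_le[OF xX])
  ultimately have "infdist z X \<le> s" using zb yx ts by (simp add: dist_norm norm_minus_commute)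
  then have De: "Delta (clarke_grad (dist_fun X) z) \<ge> \<mu>" using muc zp by blast
  obtain h where h: "norm h = 1" "\<forall>p\<in>X. norm (z - p) = infdist z X \<longrightarrow> h \<bullet> (z - p) \<ge> \<mu> * infdist z X"
    using clarke_dir[OF clX neX zp De mu(1)] by blast
  have ep: "(\<mu> - \<gamma>)/2 > 0" using g by simp
  obtain \<delta> where "\<delta> > 0" "\<forall>\<sigma>. 0 < \<sigma> \<and> \<sigma> < \<delta> \<longrightarrow> infdist (z + \<sigma> *\<^sub>R h) X \<ge> infdist z X + \<sigma> * (\<mu> - (\<mu> - \<gamma>)/2)"
    using ascent[OF clX neX zp h(1) ep, of \<mu>] h(2) by blast
  then show "\<exists>h. norm h = 1 \<and> (\<exists>\<delta>>0. \<forall>\<sigma>. 0 < \<sigma> \<and> \<sigma> < \<delta> \<longrightarrow> infdist (z + \<sigma> *\<^sub>R h) X \<ge> infdist z X + \<sigma> * (\<mu> - (\<mu> - \<gamma>)/2))"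
    using h(1) by blast
qed

lemma upper_step:
  assumes nN: "n \<in> nor_cone A x \<inter> sphere 0 1" and ep: "0 < \<epsilon>" "\<epsilon> < 1/5"
    and fr: "\<forall>a\<in>A. norm (a - x) < \<delta> \<longrightarrow> n \<bullet> (a - x) \<le> \<epsilon> * norm (a - x)"
    and zp: "infdist z X > 5 * \<epsilon> * norm (z - x)" and zd: "3 * norm (z - x) < \<delta>"
  shows "- (n \<bullet> (z - x)) \<ge> infdist z X - 5 * \<epsilon> * norm (z - x)"
proof -
  define p where "p = z - x"
  have n1: "norm n = 1" using nN by simp
  have nn: "n \<bullet> n = 1" using n1 by (simp add: dot_square_norm)
  have "z \<noteq> x" using zp xX by auto
  then have pp: "norm p > 0" by (simp add: p_def)
  define lam where "lam = max 0 (- (n \<bullet> p)) + 5 * \<epsilon> * norm p"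
  define q where "q = z + lam *\<^sub>R n"
  have qx: "q - x = p + lam *\<^sub>R n" by (simp add: q_def p_def)
  have np: "\<bar>n \<bullet> p\<bar> \<le> norm p" using Cauchy_Schwarz_ineq2[of n p] n1 by simp
  have "n \<bullet> (q - x) = n \<bullet> p + lam" using nn by (simp add: qx inner_add_right)
  also have "\<dots> \<ge> 5 * \<epsilon> * norm p" by (simp add: lam_def)
  finally have nq: "n \<bullet> (q - x) \<ge> 5 * \<epsilon> * norm p" .
  have "norm (q - x) \<le> norm p + norm (lam *\<^sub>R n)" unfolding qx by (rule norm_triangle_ineq)
  also have "\<dots> = norm p + \<bar>lam\<bar>" using n1 by simp
  also have "\<bar>lam\<bar> \<le> norm p + 5 * \<epsilon> * norm p" using np ep by (simp add: lam_def)
  finally have "norm (q - x) \<le> (2 + 5 * \<epsilon>) * norm p" by (simp add: algebra_simps)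
  also have "\<dots> < 3 * norm p" using ep pp by simp
  finally have qlt: "norm (q - x) < 3 * norm p" .
  have "q \<notin> A"
  proof
    assume "q \<in> A"
    moreover have "norm (q - x) < \<delta>" using qlt zd p_def by simp
    ultimately have "n \<bullet> (q - x) \<le> \<epsilon> * norm (q - x)" using fr by blast
    also have "\<dots> \<le> \<epsilon> * (3 * norm p)" using qlt ep by simp
    also have "\<dots> < 5 * \<epsilon> * norm p" using ep pp by simp
    finally show False using nq by simp
  qed
  then have qX: "q \<in> X" using Aeq interior_subset by auto
  have "infdist z X \<le> dist z q" by (rule infdist_le[OF qX])
  also have "\<dots> = lam" using n1 ep pp by (simp add: q_def dist_norm lam_def)
  finally have il: "infdist z X \<le> lam" .
  show ?thesis
  proof (cases "- (n \<bullet> p) \<ge> 0")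
    case True then show ?thesis using il by (simp add: lam_def p_def)
  next
    case False
    then have "lam = 5 * \<epsilon> * norm p" by (simp add: lam_def)
    then show ?thesis using il zp p_def by simp
  qed
qed

end

context sett begin

lemma lower_y:
  assumes vN: "\<And>n. n \<in> nor_cone A x \<inter> sphere 0 1 \<Longrightarrow> n \<bullet> v \<ge> (norm v)^2"
    and mpos: "norm v > 0" "norm v \<le> 1" and ep: "\<epsilon> > 0"
  shows "\<exists>\<delta>>0. \<forall>t. 0 < t \<and> t < \<delta> \<longrightarrow> infdist (x - (t / norm v) *\<^sub>R v) X \<ge> t * (norm v - \<epsilon>)"
proof -
  define m where "m = norm v"
  have m0: "m > 0" "m \<le> 1" using mpos by (auto simp: m_def)
  have e1: "\<epsilon> * m / 2 > 0" using ep m0 by simp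
  obtain \<delta>L where dL: "\<delta>L > 0" "\<And>q a. q \<notin> A \<Longrightarrow> norm (q - x) < \<delta>L \<Longrightarrow> a \<in> A \<Longrightarrow> norm (q - a) = infdist q A \<Longrightarrow>
            ((q - a) /\<^sub>R norm (q - a)) \<bullet> v \<ge> m^2 - \<epsilon> * m / 2"
    using lower_normals[OF vN e1] unfolding m_def by blast
  define \<delta> where "\<delta> = min (\<delta>L / 2) (min (r / 2) (\<epsilon> * r / 32))"
  have dp: "\<delta> > 0" using dL r ep by (simp add: \<delta>_def)
  show ?thesis
  proof (intro exI[of _ \<delta>] conjI dp allI impI)
    fix t assume t: "0 < t \<and> t < \<delta>"
    define y where "y = x - (t / m) *\<^sub>R v"
    have yx: "norm (y - x) = t" using t m0 by (simp add: y_def m_def)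
    have t1: "2 * t < \<delta>L" "2 * t < r" "t \<le> \<epsilon> * r / 32" using t by (auto simp: \<delta>_def)
    have bound: "norm (y - q) \<ge> t * (m - \<epsilon>)" if qI: "q \<in> interior X" for q
    proof (cases "norm (q - x) \<ge> 2 * t")
      case True
      have "q - x = (q - y) + (y - x)" by simp
      then have "norm (q - x) \<le> norm (q - y) + norm (y - x)" by (metis norm_triangle_ineq)
      then have "norm (y - q) \<ge> t" using True yx by (simp add: norm_minus_commute)
      moreover have "t * (m - \<epsilon>) \<le> t" using t m0 ep by (simp add: mult_left_le)
      ultimately show ?thesis by simp
    next
      case False
      then have qx: "norm (q - x) < 2 * t" by simp
      have qA: "q \<notin> A" using qI Aeq by simp
      obtain a where aA: "a \<in> A" and ad: "infdist q A = dist q a" using infdist_attains_inf[OF clA neA] by blast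
      have qa: "norm (q - a) = infdist q A" using ad by (simp add: dist_norm)
      have iq: "infdist q A \<le> norm (q - x)" using infdist_le[OF xA, of q] by (simp add: dist_norm)
      have iqr: "infdist q A < r" using iq qx t1 by simp
      have qna: "q \<noteq> a" using qA aA by auto
      define u where "u = (q - a) /\<^sub>R norm (q - a)"
      have u1: "norm u = 1" using qna by (simp add: u_def)
      have uv: "u \<bullet> v \<ge> m^2 - \<epsilon> * m / 2" unfolding u_def by (rule dL(2)[OF qA _ aA qa]) (use qx t1 in simp)
      have "infdist (a + (r/2) *\<^sub>R u) A = r/2"
        unfolding u_def using reach_ext[OF clA neA r uniq aA qA qa iqr, of "r/2"] r by simp
      from reach_Q[OF this u1 xA] have Qx: "r * (u \<bullet> (x - a)) \<le> (norm (x - a))^2" by simp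
      have "x - a = (x - q) + (q - a)" by simp
      then have "norm (x - a) \<le> norm (x - q) + norm (q - a)" by (metis norm_triangle_ineq)
      then have xa: "norm (x - a) \<le> 2 * norm (q - x)" using qa iq by (simp add: norm_minus_commute)
      then have "norm (x - a) < 4 * t" using qx by simp
      then have "(norm (x - a))^2 \<le> (4 * t)^2" by (intro power_mono) auto
      then have "r * (u \<bullet> (x - a)) \<le> 16 * t^2" using Qx by (simp add: power2_eq_square)
      then have ux: "u \<bullet> (x - a) \<le> 16 * t^2 / r" using r by (simp add: field_simps)
      have "16 * t^2 / r \<le> t * \<epsilon> / 2"
      proof -
        have "16 * t * t \<le> t * (\<epsilon> * r / 2)" using t1(3) t by (simp add: mult_left_mono)
        then show ?thesis using r by (simp add: field_simps power2_eq_square)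
      qed
      then have ux2: "u \<bullet> (x - a) \<le> t * \<epsilon> / 2" using ux by simp
      have uqa: "u \<bullet> (q - a) = norm (q - a)" using qna
        by (simp add: u_def dot_square_norm power2_eq_square)
      have "u \<bullet> (x - y) = (t / m) * (u \<bullet> v)" by (simp add: y_def)
      also have "\<dots> \<ge> (t / m) * (m^2 - \<epsilon> * m / 2)"
      proof (rule mult_left_mono)
        show "m^2 - \<epsilon> * m / 2 \<le> u \<bullet> v" by (rule uv)
        show "0 \<le> t / m" using t m0 by simp
      qed
      also have "(t / m) * (m^2 - \<epsilon> * m / 2) = t * m - t * \<epsilon> / 2" using m0 by (simp add: field_simps power2_eq_square)
      finally have uxy: "u \<bullet> (x - y) \<ge> t * m - t * \<epsilon> / 2" .
      have equ: "u \<bullet> (q - y) = u \<bullet> (q - a) - u \<bullet> (x - a) + u \<bullet> (x - y)" by (simp add: inner_diff_right)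
      have tme: "t * (m - \<epsilon>) = t * m - t * \<epsilon>" by (simp add: algebra_simps)
      have "u \<bullet> (q - y) \<ge> t * (m - \<epsilon>)" using equ tme uqa ux2 uxy norm_ge_zero[of "q - a"] by linarith
      moreover have "u \<bullet> (q - y) \<le> norm (q - y)" using norm_cauchy_schwarz[of u "q - y"] u1 by simp
      ultimately show ?thesis by (simp add: norm_minus_commute)
    qed
    have "infdist y X \<ge> t * (m - \<epsilon>)"
    proof (rule ccontr)
      assume "\<not> ?thesis"
      then have lt: "infdist y X < t * (m - \<epsilon>)" by simp
      obtain q0 where q0: "q0 \<in> X" "infdist y X = dist y q0" using infdist_attains_inf[OF clX neX] by blast
      have "q0 \<in> closure (interior X)" using clint q0 by simp
      then obtain q where q: "q \<in> interior X" "dist q q0 < t * (m - \<epsilon>) - infdist y X"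
        using lt unfolding closure_approachable by (metis diff_gt_0_iff_gt)
      have "dist y q \<le> dist y q0 + dist q q0" by (simp add: dist_triangle2)
      then have "norm (y - q) < t * (m - \<epsilon>)" using q q0 by (simp add: dist_norm)
      then show False using bound[OF q(1)] by simp
    qed
    then show "infdist (x - (t / norm v) *\<^sub>R v) X \<ge> t * (norm v - \<epsilon>)" by (simp add: y_def m_def)
  qed
qed

end

context sett begin

lemma main_ineq: "Delta (convex hull (nor_cone A x \<inter> sphere 0 1)) \<ge> \<mu>"
proof -
  define N where "N = nor_cone A x \<inter> sphere 0 1"
  define C where "C = convex hull N"
  have cC: "compact C" unfolding C_def N_def by (rule compact_convex_hull[OF compact_N])
  have neN: "N \<noteq> {}" unfolding N_def by (rule N_ne)
  then have neC: "C \<noteq> {}" unfolding C_def by (auto dest: hull_inc[of _ N convex])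
  have NC: "N \<subseteq> C" unfolding C_def by (rule hull_subset)
  obtain v where vC: "v \<in> C" and vmin: "\<And>c. c \<in> C \<Longrightarrow> dist 0 v \<le> dist 0 c"
    using distance_attains_inf[OF compact_imp_closed[OF cC] neC, of 0] by blast
  define m where "m = norm v"
  have cv: "c \<bullet> v \<ge> m^2" if "c \<in> C" for c
  proof -
    have "inner (0 - v) (c - v) \<le> 0"
      by (rule any_closest_point_dot[OF _ compact_imp_closed[OF cC] vC that]) (use vmin in \<open>auto simp: C_def\<close>)
    then show ?thesis by (simp add: m_def inner_diff_right inner_commute dot_square_norm)
  qed
  have cn: "norm c \<ge> m" if "c \<in> C" for c using vmin[OF that] by (simp add: m_def)
  obtain n0 where n0: "n0 \<in> N" using neN by blast
  then have "m \<le> norm n0" using cn NC by blast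
  then have m1: "m \<le> 1" using n0 by (simp add: N_def)
  have vN: "n \<bullet> v \<ge> (norm v)^2" if "n \<in> nor_cone A x \<inter> sphere 0 1" for n
    using cv[of n] that NC by (auto simp: N_def m_def)
  have mmu: "m \<ge> \<mu>"
  proof (rule ccontr)
    assume "\<not> m \<ge> \<mu>"
    then have mlt: "m < \<mu>" by simp
    define \<eta> where "\<eta> = \<mu> - m"
    have etap: "\<eta> > 0" using mlt by (simp add: \<eta>_def)
    define \<epsilon> where "\<epsilon> = \<eta> / 40"
    have mnn: "0 \<le> m" by (simp add: m_def)
    have ep: "\<epsilon> > 0" "\<epsilon> < 1/5" using etap mu mlt mnn by (auto simp: \<epsilon>_def \<eta>_def)
    define \<gamma> where "\<gamma> = m + \<eta> / 2"
    have gam: "0 \<le> \<gamma>" "\<gamma> < \<mu>" using etap mnn mlt by (auto simp: \<gamma>_def \<eta>_def field_simps)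
    obtain \<delta>F where dF: "\<delta>F > 0" and fr: "\<forall>n\<in>N. \<forall>a\<in>A. norm (a - x) < \<delta>F \<longrightarrow> n \<bullet> (a - x) \<le> \<epsilon> * norm (a - x)"
      using frechet_unif[OF ep(1), of A x] unfolding N_def by blast
    have "\<exists>t y. t > 0 \<and> 2 * t \<le> s \<and> 6 * t < \<delta>F \<and> infdist y X > 0 \<and> norm (y - x) \<le> t \<and> infdist y X \<ge> - (v \<bullet> (y - x)) - \<epsilon> * t"
    proof (cases "m = 0")
      case True
      then have v0: "v = 0" by (simp add: m_def)
      define t where "t = min (s/2) (\<delta>F / 7)"
      have tp: "t > 0" using s dF by (simp add: t_def)
      obtain y where y: "y \<in> - X" "dist y x < t" using xcl tp unfolding closure_approachable by blast
      have "infdist y X > 0" using infdist_pos_not_in_closed[OF clX neX] y(1) by simp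
      moreover have "norm (y - x) \<le> t" using y(2) by (simp add: dist_norm)
      moreover have "infdist y X \<ge> - (v \<bullet> (y - x)) - \<epsilon> * t" 
      proof -
        have "\<epsilon> * t > 0" using ep tp by simp
        then show ?thesis using v0 infdist_nonneg[of y X] by simp
      qed
      moreover have "2 * t \<le> s" "6 * t < \<delta>F" using dF by (auto simp: t_def)
      ultimately show ?thesis using tp by blast
    next
      case False
      then have m0: "m > 0" by (simp add: m_def)
      define \<epsilon>' where "\<epsilon>' = min \<epsilon> (m/2)"
      have e'p: "\<epsilon>' > 0" using ep m0 by (simp add: \<epsilon>'_def)
      obtain \<delta>' where d': "\<delta>' > 0" "\<forall>t. 0 < t \<and> t < \<delta>' \<longrightarrow> infdist (x - (t / norm v) *\<^sub>R v) X \<ge> t * (norm v - \<epsilon>')"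
        using lower_y[OF vN _ _ e'p] m0 m1 by (auto simp: m_def)
      define t where "t = min (s/2) (min (\<delta>F / 7) (\<delta>' / 2))"
      have tp: "t > 0" using s dF d' by (simp add: t_def)
      have tlt: "t < \<delta>'" using d' by (simp add: t_def)
      define y where "y = x - (t / m) *\<^sub>R v"
      have iy: "infdist y X \<ge> t * (m - \<epsilon>')" using d'(2) tp tlt by (simp add: y_def m_def)
      have a1: "t * (m - \<epsilon>') \<ge> t * (m / 2)" using tp by (intro mult_left_mono) (auto simp: \<epsilon>'_def)
      have a2: "t * (m / 2) > 0" using tp m0 by simp
      have pos: "infdist y X > 0" using iy a1 a2 by linarith
      have yx: "y - x = - ((t / m) *\<^sub>R v)" by (simp add: y_def)
      have nyx: "norm (y - x) \<le> t" using tp m0 unfolding yx by (simp add: m_def)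
      have vv: "v \<bullet> v = m * m" by (simp add: m_def dot_square_norm power2_eq_square)
      have "- (v \<bullet> (y - x)) = (t / m) * (v \<bullet> v)" unfolding yx by simp
      also have "\<dots> = t * m" using m0 vv by simp
      finally have dyx: "- (v \<bullet> (y - x)) = t * m" .
      have "t * \<epsilon>' \<le> t * \<epsilon>" using tp by (intro mult_left_mono) (auto simp: \<epsilon>'_def)
      then have a3: "t * (m - \<epsilon>') \<ge> t * m - \<epsilon> * t" by (simp add: algebra_simps)
      have a4: "2 * t \<le> s" "6 * t < \<delta>F" using dF by (auto simp: t_def)
      have a5: "infdist y X \<ge> - (v \<bullet> (y - x)) - \<epsilon> * t" using iy a3 dyx by linarith
      show ?thesis by (rule exI[of _ t], rule exI[of _ y]) (use tp a4 pos nyx a5 in blast)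
    qed
    then obtain t y where ty: "t > 0" "2 * t \<le> s" "6 * t < \<delta>F" "infdist y X > 0" "norm (y - x) \<le> t"
        "infdist y X \<ge> - (v \<bullet> (y - x)) - \<epsilon> * t" by blast
    obtain z where z: "norm (z - y) = t" "infdist z X \<ge> infdist y X + \<gamma> * t"
      using ascent_step[OF ty(4) ty(5) ty(1) ty(2) gam] by blast
    have "z - x = (z - y) + (y - x)" by simp
    then have "norm (z - x) \<le> norm (z - y) + norm (y - x)" by (metis norm_triangle_ineq)
    then have zx: "norm (z - x) \<le> 2 * t" using z(1) ty(5) by simp
    have gt: "\<gamma> * t \<ge> \<eta> / 2 * t" using ty(1) by (intro mult_right_mono) (auto simp: \<gamma>_def m_def)
    have "5 * \<epsilon> * norm (z - x) \<le> 5 * \<epsilon> * (2 * t)" using zx ep by (intro mult_left_mono) auto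
    also have "\<dots> = \<eta> / 4 * t" by (simp add: \<epsilon>_def)
    also have "\<dots> < \<eta> / 2 * t" using etap ty(1) by simp
    finally have "5 * \<epsilon> * norm (z - x) < infdist z X" using gt z(2) ty(4) by simp
    note zp = this
    have zd: "3 * norm (z - x) < \<delta>F" using zx ty(3) by simp
    have bnd: "n \<in> {w. inner (z - x) w \<le> - (infdist z X - 10 * \<epsilon> * t)}" if nN: "n \<in> N" for n
    proof -
      have "- (n \<bullet> (z - x)) \<ge> infdist z X - 5 * \<epsilon> * norm (z - x)"
        by (rule upper_step[of n \<epsilon> \<delta>F z]) (use nN fr ep zp zd in \<open>auto simp: N_def\<close>)
      moreover have "5 * \<epsilon> * norm (z - x) \<le> 10 * \<epsilon> * t" using zx ep by simp
      ultimately show ?thesis by (simp add: inner_commute)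
    qed
    have "C \<subseteq> {w. inner (z - x) w \<le> - (infdist z X - 10 * \<epsilon> * t)}"
      unfolding C_def by (rule hull_minimal) (use bnd convex_halfspace_le in auto)
    then have A1: "- (v \<bullet> (z - x)) \<ge> infdist z X - 10 * \<epsilon> * t" using vC by (auto simp: inner_commute)
    have A2: "v \<bullet> (z - x) = v \<bullet> (z - y) + v \<bullet> (y - x)" by (simp add: inner_diff_right)
    have "- (v \<bullet> (z - y)) \<le> m * t"
      using Cauchy_Schwarz_ineq2[of v "z - y"] z(1) by (simp add: m_def)
    note A3 = this
    have eqs: "\<gamma> * t = m * t + \<eta> * t / 2" "\<epsilon> * t = \<eta> * t / 40" by (simp_all add: \<gamma>_def \<epsilon>_def algebra_simps)
    have "\<eta> * t > 0" using etap ty(1) by simp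
    then show False using A1 A2 A3 eqs z(2) ty(6) by linarith
  qed
  show ?thesis
    unfolding Delta_def N_def[symmetric] C_def[symmetric]
  proof (rule cInf_greatest)
    show "norm ` C \<noteq> {}" using neC by simp
    fix w assume "w \<in> norm ` C"
    then obtain c where "c \<in> C" "w = norm c" by blast
    then show "\<mu> \<le> w" using cn[of c] mmu by linarith
  qed
qed

end

theorem mainTheorem20:
  fixes X :: "'a::euclidean_space set" and \<mu> :: real and x :: 'a
  assumes "0 < \<mu>" and "\<mu> \<le> 1"
    and "complementary_regular X"
    and "reach_mu \<mu> X > 0"
    and "x \<in> frontier X"
  shows "Delta (convex hull (nor_cone (compl_cl X) x \<inter> sphere 0 1)) \<ge> \<mu>"
proof -
  have cX: "compact X" and clint: "closure (interior X) = X" and rA: "reach (compl_cl X) > 0"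
    using assms(3) unfolding complementary_regular_def by auto
  have clX: "closed X" using cX by (rule compact_imp_closed)
  define A where "A = compl_cl X"
  have Aeq: "A = - interior X" unfolding A_def compl_cl_def
    by (simp add: Compl_eq_Diff_UNIV[symmetric] closure_complement)
  have fr: "x \<in> closure X" "x \<in> closure (- X)" using assms(5) frontier_closures by auto
  have xX: "x \<in> X" using fr clX by (simp add: closure_closed)
  have xA: "x \<in> A" using assms(5) Aeq by (simp add: frontier_def)
  have neX: "X \<noteq> {}" using xX by auto
  obtain e where e: "e \<in> {ereal t | t. t \<ge> 0 \<and>
      (\<forall>y. dist_fun A y < t \<longrightarrow> (\<exists>!a. a \<in> A \<and> norm (y - a) = dist_fun A y))}" "0 < e"
    using rA unfolding reach_def A_def[symmetric] less_Sup_iff by blast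
  then obtain r where r: "e = ereal r" "\<forall>y. dist_fun A y < r \<longrightarrow> (\<exists>!a. a \<in> A \<and> norm (y - a) = dist_fun A y)"
    by blast
  have rp: "r > 0" using e(2) r(1) by simp
  obtain e2 where e2: "e2 \<in> {ereal s | s. s \<ge> 0 \<and>
      (\<forall>y. 0 < dist_fun X y \<and> dist_fun X y \<le> s \<longrightarrow> Delta (clarke_grad (dist_fun X) y) \<ge> \<mu>)}" "0 < e2"
    using assms(4) unfolding reach_mu_def less_Sup_iff by blast
  then obtain s where s: "e2 = ereal s" "\<forall>y. 0 < dist_fun X y \<and> dist_fun X y \<le> s \<longrightarrow> Delta (clarke_grad (dist_fun X) y) \<ge> \<mu>"
    by blast
  have sp: "s > 0" using e2(2) s(1) by simp
  interpret sett X A x r s \<mu>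
  proof
    show "closed X" "X \<noteq> {}" "x \<in> X" "A = - interior X" "closure (interior X) = X" "x \<in> A" "r > 0" "s > 0"
      "0 < \<mu>" "\<mu> \<le> 1" "x \<in> closure (- X)"
      using clX neX xX Aeq clint xA rp sp assms(1,2) fr by auto
    fix y
    show "infdist y A < r \<Longrightarrow> (\<exists>!a. a \<in> A \<and> norm (y - a) = infdist y A)" using r(2) by (simp add: dist_fun_def)
    show "0 < infdist y X \<Longrightarrow> infdist y X \<le> s \<Longrightarrow> Delta (clarke_grad (dist_fun X) y) \<ge> \<mu>"
      using s(2) by (simp add: dist_fun_def)
  qed
  show ?thesis using main_ineq by (simp add: A_def)
qed

end
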